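(* Let $G$ be a group with a conjugation-closed generating set $X$, let $g\in\mathrm{Mon}(X)$ with $n=\ell(g)$, and let $\mathbf x\in\mathrm{Fact}(G,g,\mathbf I)$. Then the map $L$ restricts to a poset isomorphism from the lower set ${\downarrow}(\mathbf x)=\{\mathbf y\in\mathrm{Fact}(G,g,\mathbf I):\mathbf y\le\mathbf x\}$ onto the lower set ${\downarrow}(L(\mathbf x))$ in $\mathrm{Comp}(\mathbb Z,n,\mathbf I)$.
   Context: $\mathrm{Mon}(X)$ is the generated submonoid; $\ell(x)$ is the minimal length of a product of elements of $X$ equal to $x$. A linear factorization of $g$ is a row vector $[x_L\ x_1\ \cdots\ x_k\ x_R]$ ($k\ge0$) of elements of $\mathrm{Mon}(X)$ with $x_1,\dots,x_k\ne1$ ($x_L,x_R$ may be trivial), $\ell(x_L)+\sum\ell(x_i)+\ell(x_R)=\ell(g)$, $x_Lx_1\cdots x_kx_R=g$. With $x_0=x_L$, $x_{k+1}=x_R$, the merge at position $i\in\{0,\dots,k\}$ replaces consecutive entries $x_i,x_{i+1}$ by the single entry $x_ix_{i+1}$. $\mathrm{Fact}(G,g,\mathbf I)$ is the set of linear factorizations ordered by $\mathbf y\le\mathbf x$ iff $\mathbf y$ is obtained from $\mathbf x$ by a finite sequence of merges. For $G=\mathbb Z$, $X=\{1\}$ (additive notation), these are linear compositions of $n$, forming $\mathrm{Comp}(\mathbb Z,n,\mathbf I)$. $L([x_L\ x_1\cdots x_k\ x_R])=[\ell(x_L)\ \ell(x_1)\cdots\ell(x_k)\ \ell(x_R)]$.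 *)

theory Defs
  imports "HOL-Algebra.Algebra"
begin

definition mprod :: "('a, 'b) monoid_scheme \<Rightarrow> 'a list \<Rightarrow> 'a" where
  "mprod M xs = foldr (\<lambda>a b. a \<otimes>\<^bsub>M\<^esub> b) xs \<one>\<^bsub>M\<^esub>"

definition MonX :: "('a, 'b) monoid_scheme \<Rightarrow> 'a set \<Rightarrow> 'a set" where
  "MonX M S = {y. \<exists>xs. set xs \<subseteq> S \<and> y = mprod M xs}"

definition wlen :: "('a, 'b) monoid_scheme \<Rightarrow> 'a set \<Rightarrow> 'a \<Rightarrow> nat" where
  "wlen M S x = (LEAST n. \<exists>xs. set xs \<subseteq> S \<and> length xs = n \<and> mprod M xs = x)"

definition conj_closed :: "('a, 'b) monoid_scheme \<Rightarrow> 'a set \<Rightarrow> bool" where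
  "conj_closed M S \<longleftrightarrow>
     (\<forall>h\<in>carrier M. \<forall>x\<in>S. h \<otimes>\<^bsub>M\<^esub> x \<otimes>\<^bsub>M\<^esub> inv\<^bsub>M\<^esub> h \<in> S)"

(* A linear factorization [x_L x_1 ... x_k x_R] is represented as the list
   [x_L, x_1, ..., x_k, x_R] of length k + 2. *)
definition Fact :: "('a, 'b) monoid_scheme \<Rightarrow> 'a set \<Rightarrow> 'a \<Rightarrow> 'a list set" where
  "Fact M S g = {xs. 2 \<le> length xs \<and> set xs \<subseteq> MonX M S
      \<and> (\<forall>i. 0 < i \<and> i < length xs - 1 \<longrightarrow> xs ! i \<noteq> \<one>\<^bsub>M\<^esub>)
      \<and> sum_list (map (wlen M S) xs) = wlen M S g
      \<and> mprod M xs = g}"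

definition merge_at :: "('a, 'b) monoid_scheme \<Rightarrow> nat \<Rightarrow> 'a list \<Rightarrow> 'a list" where
  "merge_at M i xs = take i xs @ [xs ! i \<otimes>\<^bsub>M\<^esub> xs ! Suc i] @ drop (Suc (Suc i)) xs"

definition merge_step :: "('a, 'b) monoid_scheme \<Rightarrow> 'a list \<Rightarrow> 'a list \<Rightarrow> bool" where
  "merge_step M xs ys \<longleftrightarrow> (\<exists>i. Suc i < length xs \<and> ys = merge_at M i xs)"

definition fact_le :: "('a, 'b) monoid_scheme \<Rightarrow> 'a set \<Rightarrow> 'a \<Rightarrow> 'a list \<Rightarrow> 'a list \<Rightarrow> bool" where
  "fact_le M S g ys xs \<longleftrightarrow> ys \<in> Fact M S g \<and> xs \<in> Fact M S g \<and> (merge_step M)\<^sup>*\<^sup>* xs ys"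

definition down :: "('a, 'b) monoid_scheme \<Rightarrow> 'a set \<Rightarrow> 'a \<Rightarrow> 'a list \<Rightarrow> 'a list set" where
  "down M S g xs = {ys. fact_le M S g ys xs}"

definition Comp :: "nat \<Rightarrow> int list set" where
  "Comp n = Fact integer_group {1} (int n)"

definition comp_le :: "nat \<Rightarrow> int list \<Rightarrow> int list \<Rightarrow> bool" where
  "comp_le n = fact_le integer_group {1} (int n)"

definition comp_down :: "nat \<Rightarrow> int list \<Rightarrow> int list set" where
  "comp_down n as = down integer_group {1} (int n) as"

definition Lmap :: "('a, 'b) monoid_scheme \<Rightarrow> 'a set \<Rightarrow> 'a list \<Rightarrow> int list" where
  "Lmap M S xs = map (\<lambda>x. int (wlen M S x)) xs"

end

theory Submission
  imports Defs
begin


fun blocks :: "nat list \<Rightarrow> 'a list \<Rightarrow> 'a list list" where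
  "blocks [] xs = []"
| "blocks (k # ks) xs = take k xs # blocks ks (drop k xs)"

definition mg :: "('a \<Rightarrow> 'a \<Rightarrow> 'a) \<Rightarrow> nat \<Rightarrow> 'a list \<Rightarrow> 'a list" where
  "mg f i l = take i l @ [f (l ! i) (l ! Suc i)] @ drop (Suc (Suc i)) l"

lemma length_blocks [simp]: "length (blocks ks xs) = length ks"
  by (induction ks arbitrary: xs) auto

lemma concat_blocks: "sum_list ks = length xs \<Longrightarrow> concat (blocks ks xs) = xs"
  by (induction ks arbitrary: xs) auto

lemma blocks_map: "blocks ks (map f xs) = map (map f) (blocks ks xs)"
  by (induction ks arbitrary: xs) (auto simp: take_map drop_map)

lemma blocks_set: "b \<in> set (blocks ks xs) \<Longrightarrow> set b \<subseteq> set xs"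
  by (induction ks arbitrary: xs) (auto dest: in_set_takeD in_set_dropD)

lemma blocks_nonempty: "\<forall>k\<in>set ks. 0 < k \<Longrightarrow> sum_list ks = length xs \<Longrightarrow> b \<in> set (blocks ks xs) \<Longrightarrow> b \<noteq> []"
proof (induction ks arbitrary: xs)
  case (Cons k ks)
  have "sum_list ks = length (drop k xs)" using Cons.prems by simp
  then show ?case using Cons.IH[of "drop k xs"] Cons.prems by auto
qed auto

lemma blocks_one: "blocks (replicate (length xs) 1) xs = map (\<lambda>x. [x]) xs"
  by (induction xs) auto

lemma decomp2: "Suc i < length l \<Longrightarrow> l = take i l @ l ! i # l ! Suc i # drop (Suc (Suc i)) l"
  by (metis Cons_nth_drop_Suc Suc_lessD append_take_drop_id)

lemma mg_length [simp]: "Suc i < length l \<Longrightarrow> length (mg f i l) = length l - 1"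
  by (auto simp: mg_def)

lemma sum_mg: "Suc i < length (l::nat list) \<Longrightarrow> sum_list (mg (+) i l) = sum_list l"
proof -
  assume a: "Suc i < length l"
  have "sum_list l = sum_list (take i l @ l ! i # l ! Suc i # drop (Suc (Suc i)) l)"
    using decomp2[OF a] by metis
  then show ?thesis by (simp add: mg_def)
qed

lemma pos_mg: "Suc i < length (l::nat list) \<Longrightarrow> \<forall>k\<in>set l. 0 < k \<Longrightarrow> \<forall>k\<in>set (mg (+) i l). 0 < k"
  by (auto simp: mg_def dest: in_set_takeD in_set_dropD)

lemma blocks_mg: "Suc i < length ks \<Longrightarrow> blocks (mg (+) i ks) xs = mg (@) i (blocks ks xs)"
proof (induction i arbitrary: ks xs)
  case 0
  then obtain a b r where k: "ks = a # b # r"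
    by (cases ks; cases "tl ks") auto
  have "take (a + b) xs = take a xs @ take b (drop a xs)" by (rule take_add)
  moreover have "drop (a + b) xs = drop b (drop a xs)" by (simp add: add.commute)
  ultimately show ?case by (simp add: mg_def k)
next
  case (Suc i)
  then obtain a r where "ks = a # r" by (cases ks) auto
  with Suc show ?case by (simp add: mg_def)
qed

lemma map_mg: "Suc i < length l \<Longrightarrow> h (f (l ! i) (l ! Suc i)) = f' (h (l ! i)) (h (l ! Suc i))
  \<Longrightarrow> map h (mg f i l) = mg f' i (map h l)"
  by (simp add: mg_def take_map drop_map)

lemma merge_at_mg: "merge_at M i = mg (\<lambda>a b. a \<otimes>\<^bsub>M\<^esub> b) i"
  by (auto simp: merge_at_def mg_def fun_eq_iff)

lemma mprod_Nil [simp]: "mprod M [] = \<one>\<^bsub>M\<^esub>"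
  by (simp add: mprod_def)

lemma mprod_Cons [simp]: "mprod M (x # xs) = x \<otimes>\<^bsub>M\<^esub> mprod M xs"
  by (simp add: mprod_def)

lemma mprod_closed: "monoid M \<Longrightarrow> set l \<subseteq> carrier M \<Longrightarrow> mprod M l \<in> carrier M"
  by (induction l) (auto simp: monoid.m_closed monoid.one_closed)

lemma mprod_append: "monoid M \<Longrightarrow> set a \<subseteq> carrier M \<Longrightarrow> set b \<subseteq> carrier M \<Longrightarrow>
   mprod M (a @ b) = mprod M a \<otimes>\<^bsub>M\<^esub> mprod M b"
  by (induction a) (auto simp: monoid.l_one monoid.m_assoc mprod_closed)

lemma mprod_single: "monoid M \<Longrightarrow> x \<in> carrier M \<Longrightarrow> mprod M [x] = x"
  by (simp add: monoid.r_one)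

lemma mprod_concat: "monoid M \<Longrightarrow> \<forall>b\<in>set bs. set b \<subseteq> carrier M \<Longrightarrow>
   mprod M (map (mprod M) bs) = mprod M (concat bs)"
proof (induction bs)
  case (Cons a bs)
  have "set (concat bs) \<subseteq> carrier M" using Cons.prems by auto
  have "set a \<subseteq> carrier M" using Cons.prems by auto
  have "mprod M (map (mprod M) (a # bs)) = mprod M a \<otimes>\<^bsub>M\<^esub> mprod M (map (mprod M) bs)"
    by simp
  also have "\<dots> = mprod M a \<otimes>\<^bsub>M\<^esub> mprod M (concat bs)" proof -
    have "\<forall>b\<in>set bs. set b \<subseteq> carrier M" using Cons.prems(2) by simp
    then have "mprod M (map (mprod M) bs) = mprod M (concat bs)" using Cons.IH[OF Cons.prems(1)] by blast
    then show ?thesis by (rule arg_cong)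
  qed
  also have "\<dots> = mprod M (concat (a # bs))"
    using mprod_append[OF Cons.prems(1) \<open>set a \<subseteq> carrier M\<close> \<open>set (concat bs) \<subseteq> carrier M\<close>] by simp
  finally show ?case .
qed simp

lemma mprod_int: "mprod integer_group l = sum_list l"
proof (induction l)
  case (Cons a l)
  then show ?case by (simp only: mprod_Cons mult_integer_group sum_list.Cons)
qed (simp only: mprod_Nil one_integer_group sum_list.Nil)



lemma MonX_mprod: "monoid M \<Longrightarrow> S \<subseteq> carrier M \<Longrightarrow> set l \<subseteq> MonX M S \<Longrightarrow> mprod M l \<in> MonX M S"
proof (induction l)
  case Nil
  then show ?case unfolding MonX_def by (auto intro: exI[of _ "[]"])
next
  case (Cons a l)
  then have "mprod M l \<in> MonX M S" by auto
  then obtain wl where wl: "set wl \<subseteq> S" "mprod M l = mprod M wl" unfolding MonX_def by auto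
  from Cons.prems obtain wa where wa: "set wa \<subseteq> S" "a = mprod M wa" unfolding MonX_def by auto
  have "mprod M (wa @ wl) = mprod M wa \<otimes>\<^bsub>M\<^esub> mprod M wl"
    using mprod_append[OF Cons.prems(1)] wa wl Cons.prems(2) by blast
  then have "mprod M (a # l) = mprod M (wa @ wl)" using wa wl by simp
  moreover have "set (wa @ wl) \<subseteq> S" using wa wl by auto
  ultimately show ?case unfolding MonX_def by blast
qed

lemma MonX_carrier: "monoid M \<Longrightarrow> S \<subseteq> carrier M \<Longrightarrow> MonX M S \<subseteq> carrier M"
  unfolding MonX_def using mprod_closed by blast

lemma wlen_word: "x \<in> MonX M S \<Longrightarrow> \<exists>w. set w \<subseteq> S \<and> length w = wlen M S x \<and> mprod M w = x"
proof -
  assume "x \<in> MonX M S"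
  then obtain w where "set w \<subseteq> S" "x = mprod M w" unfolding MonX_def by auto
  then have "\<exists>n w. set w \<subseteq> S \<and> length w = n \<and> mprod M w = x" by auto
  then show ?thesis unfolding wlen_def by (rule LeastI_ex)
qed

lemma wlen_le: "set w \<subseteq> S \<Longrightarrow> wlen M S (mprod M w) \<le> length w"
  unfolding wlen_def by (rule Least_le) auto

lemma wlen_one: "wlen M S \<one>\<^bsub>M\<^esub> = 0"
  using wlen_le[of "[]" S M] by simp

lemma wlen_zero: "x \<in> MonX M S \<Longrightarrow> wlen M S x = 0 \<Longrightarrow> x = \<one>\<^bsub>M\<^esub>"
  using wlen_word[of x M S] by auto

lemma wlen_sub: "monoid M \<Longrightarrow> S \<subseteq> carrier M \<Longrightarrow> set l \<subseteq> MonX M S \<Longrightarrow>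
  wlen M S (mprod M l) \<le> sum_list (map (wlen M S) l)"
proof (induction l)
  case Nil
  then show ?case by (simp add: wlen_one)
next
  case (Cons a l)
  then have ml: "mprod M l \<in> MonX M S" using MonX_mprod by (metis insert_subset list.simps(15))
  obtain wl where wl: "set wl \<subseteq> S" "length wl = wlen M S (mprod M l)" "mprod M wl = mprod M l"
    using wlen_word[OF ml] by blast
  have am: "a \<in> MonX M S" using Cons.prems by auto
  obtain wa where wa: "set wa \<subseteq> S" "length wa = wlen M S a" "mprod M wa = a"
    using wlen_word[OF am] by blast
  have "mprod M (wa @ wl) = mprod M wa \<otimes>\<^bsub>M\<^esub> mprod M wl"
    using mprod_append[OF Cons.prems(1)] wa wl Cons.prems(2) by blast
  then have e: "mprod M (a # l) = mprod M (wa @ wl)" using wa wl by simp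
  have "wlen M S (mprod M (a # l)) \<le> length (wa @ wl)" unfolding e
    by (rule wlen_le) (use wa wl in auto)
  also have "\<dots> = wlen M S a + wlen M S (mprod M l)" using wa wl by simp
  also have "\<dots> \<le> wlen M S a + sum_list (map (wlen M S) l)" using Cons by auto
  finally show ?case by simp
qed

lemma reach_blocks:
  assumes "monoid M" "set xs \<subseteq> carrier M" "(merge_step M)\<^sup>*\<^sup>* xs ys"
  shows "\<exists>ks. (\<forall>k\<in>set ks. 0 < k) \<and> sum_list ks = length xs \<and> ys = map (mprod M) (blocks ks xs)"
  using assms(3)
proof (induction rule: rtranclp_induct)
  case base
  have "map (mprod M) (map (\<lambda>x. [x]) xs) = xs"
    using assms(1,2) by (induction xs) (auto simp: mprod_single)
  then show ?case
    by (intro exI[of _ "replicate (length xs) 1"]) (simp add: blocks_one[simplified] sum_list_replicate)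
next
  case (step y z)
  then obtain ks where ks: "\<forall>k\<in>set ks. 0 < k" "sum_list ks = length xs" "y = map (mprod M) (blocks ks xs)"
    by blast
  from step(2) obtain i where i: "Suc i < length y" "z = merge_at M i y" unfolding merge_step_def by blast
  have il: "Suc i < length ks" using i ks by simp
  let ?B = "blocks ks xs"
  have car: "\<And>b. b \<in> set ?B \<Longrightarrow> set b \<subseteq> carrier M" using blocks_set assms(2) by blast
  have "Suc i < length ?B" using il by simp
  then have "map (mprod M) (mg (@) i ?B) = mg (\<lambda>a b. a \<otimes>\<^bsub>M\<^esub> b) i (map (mprod M) ?B)"
    by (rule map_mg) (use car mprod_append[OF assms(1)] \<open>Suc i < length ?B\<close> in auto)
  note eq = this
  have "z = mg (\<lambda>a b. a \<otimes>\<^bsub>M\<^esub> b) i (map (mprod M) ?B)" using i ks by (simp add: merge_at_mg)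
  then have "z = map (mprod M) (blocks (mg (+) i ks) xs)"
    by (simp only: blocks_mg[OF il] eq)
  moreover have "\<forall>k\<in>set (mg (+) i ks). 0 < k" using pos_mg[OF il ks(1)] .
  moreover have "sum_list (mg (+) i ks) = length xs" using sum_mg[OF il] ks by simp
  ultimately show ?case by blast
qed

lemma merge_cons: "(merge_step M)\<^sup>*\<^sup>* as bs \<Longrightarrow> (merge_step M)\<^sup>*\<^sup>* (c # as) (c # bs)"
proof (induction rule: rtranclp_induct)
  case (step y z)
  then obtain i where "Suc i < length y" "z = merge_at M i y" unfolding merge_step_def by blast
  then have "merge_step M (c # y) (c # z)" unfolding merge_step_def
    by (intro exI[of _ "Suc i"]) (simp add: merge_at_def)
  then show ?case using step by auto
qed simp

lemma merge_first: "b \<noteq> [] \<Longrightarrow> monoid M \<Longrightarrow> set b \<subseteq> carrier M \<Longrightarrow>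
   (merge_step M)\<^sup>*\<^sup>* (b @ rest) (mprod M b # rest)"
proof (induction b)
  case (Cons a b)
  show ?case
  proof (cases "b = []")
    case True
    then show ?thesis using Cons by (simp add: mprod_single)
  next
    case False
    then have "(merge_step M)\<^sup>*\<^sup>* (b @ rest) (mprod M b # rest)" using Cons by auto
    then have "(merge_step M)\<^sup>*\<^sup>* (a # b @ rest) (a # mprod M b # rest)" by (rule merge_cons)
    moreover have "merge_step M (a # mprod M b # rest) (mprod M (a # b) # rest)"
      unfolding merge_step_def by (intro exI[of _ 0]) (simp add: merge_at_def)
    ultimately show ?thesis by simp
  qed
qed simp

lemma blocks_reach: "monoid M \<Longrightarrow> set xs \<subseteq> carrier M \<Longrightarrow> \<forall>k\<in>set ks. 0 < k \<Longrightarrow>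
  sum_list ks = length xs \<Longrightarrow> (merge_step M)\<^sup>*\<^sup>* xs (map (mprod M) (blocks ks xs))"
proof (induction ks arbitrary: xs)
  case Nil
  then show ?case by simp
next
  case (Cons k ks)
  have ne: "take k xs \<noteq> []" using Cons.prems by auto
  have c1: "set (take k xs) \<subseteq> carrier M" using Cons.prems(2) by (meson order.trans set_take_subset)
  have c2: "set (drop k xs) \<subseteq> carrier M" using Cons.prems(2) by (meson order.trans set_drop_subset)
  have "(merge_step M)\<^sup>*\<^sup>* (take k xs @ drop k xs) (mprod M (take k xs) # drop k xs)"
    by (rule merge_first[OF ne Cons.prems(1) c1])
  moreover have "(merge_step M)\<^sup>*\<^sup>* (mprod M (take k xs) # drop k xs)
       (mprod M (take k xs) # map (mprod M) (blocks ks (drop k xs)))"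
    by (rule merge_cons, rule Cons.IH[OF Cons.prems(1) c2]) (use Cons.prems in auto)
  ultimately show ?case by simp
qed



lemma inner_iff: "(\<forall>i. 0 < i \<and> i < length l - 1 \<longrightarrow> P (l ! i)) \<longleftrightarrow> (\<forall>x\<in>set (butlast (tl l)). P x)"
proof
  assume H: "\<forall>i. 0 < i \<and> i < length l - 1 \<longrightarrow> P (l ! i)"
  show "\<forall>x\<in>set (butlast (tl l)). P x"
  proof
    fix x assume "x \<in> set (butlast (tl l))"
    then obtain j where j: "j < length (butlast (tl l))" "x = butlast (tl l) ! j"
      by (auto simp: in_set_conv_nth)
    then have "x = l ! Suc j" by (simp add: nth_butlast nth_tl)
    moreover have "0 < Suc j \<and> Suc j < length l - 1" using j by simp
    ultimately show "P x" using H by blast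
  qed
next
  assume H: "\<forall>x\<in>set (butlast (tl l)). P x"
  show "\<forall>i. 0 < i \<and> i < length l - 1 \<longrightarrow> P (l ! i)"
  proof (intro allI impI)
    fix i assume i: "0 < i \<and> i < length l - 1"
    then obtain j where ij: "i = Suc j" by (cases i) auto
    then have "l ! i = butlast (tl l) ! (i - 1)" using i by (simp add: nth_butlast nth_tl)
    moreover have "i - 1 < length (butlast (tl l))" using i by auto
    ultimately show "P (l ! i)" using H by (metis nth_mem)
  qed
qed

lemma inner_blocks:
  assumes "\<forall>k\<in>set ks. 0 < k" "sum_list ks = length w" "2 \<le> length ks"
    "\<forall>x\<in>set (butlast (tl w)). (0::nat) < x"
  shows "\<forall>x\<in>set (butlast (tl (map sum_list (blocks ks w)))). 0 < x"
proof -
  let ?B = "blocks ks w"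
  have lB: "2 \<le> length ?B" using assms(3) by simp
  obtain b0 r where r: "?B = b0 # r" using lB by (cases ?B) auto
  have "r \<noteq> []" using lB r by auto
  then obtain mid bl where m: "r = mid @ [bl]" by (metis rev_exhaust)
  have B: "?B = b0 # mid @ [bl]" using r m by simp
  have ne: "\<And>b. b \<in> set ?B \<Longrightarrow> b \<noteq> []" using blocks_nonempty[OF assms(1,2)] by blast
  have "b0 \<noteq> []" "bl \<noteq> []" using ne B by auto
  have w: "w = b0 @ concat mid @ bl" using concat_blocks[OF assms(2)] B by simp
  have bt: "butlast (tl w) = tl b0 @ concat mid @ butlast bl"
    using \<open>b0 \<noteq> []\<close> \<open>bl \<noteq> []\<close> w by (simp add: butlast_append)
  have "butlast (tl (map sum_list ?B)) = map sum_list mid" using B by (simp add: map_butlast[symmetric])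
  moreover have "\<forall>c\<in>set mid. 0 < sum_list c"
  proof
    fix c assume c: "c \<in> set mid"
    then have "c \<noteq> []" using ne B by auto
    then obtain y where y: "y \<in> set c" by (cases c) auto
    then have "y \<in> set (butlast (tl w))" using c bt by auto
    then have "0 < y" using assms(4) by auto
    moreover have "y \<le> sum_list c" using y by (rule member_le_sum_list) simp
    ultimately show "0 < sum_list c" by simp
  qed
  ultimately show ?thesis by auto
qed

lemma sum_list_map_concat: "sum_list (map f (concat B)) = sum_list (map (\<lambda>b. sum_list (map f b)) B)"
  by (induction B) auto

lemma sum_list_eq_map: "\<forall>b\<in>set B. f b \<le> (h b :: nat) \<Longrightarrow> sum_list (map f B) = sum_list (map h B) \<Longrightarrow> map f B = map h B"
proof (induction B)
  case (Cons a B)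
  have "sum_list (map f B) \<le> sum_list (map h B)" using Cons.prems(1) by (intro sum_list_mono) auto
  then have "f a = h a" "sum_list (map f B) = sum_list (map h B)" using Cons.prems by auto
  then show ?case using Cons by auto
qed simp

lemma fact_blocks:
  assumes G: "monoid G" "S \<subseteq> carrier G" and xs: "xs \<in> Fact G S g"
    and ks: "\<forall>k\<in>set ks. 0 < k" "sum_list ks = length xs" "2 \<le> length ks"
  shows "map (mprod G) (blocks ks xs) \<in> Fact G S g \<and>
    map (wlen G S) (map (mprod G) (blocks ks xs)) = map sum_list (blocks ks (map (wlen G S) xs))"
proof -
  let ?B = "blocks ks xs"
  let ?ys = "map (mprod G) ?B"
  let ?w = "wlen G S"
  have xsF: "2 \<le> length xs" "set xs \<subseteq> MonX G S" "\<forall>i. 0 < i \<and> i < length xs - 1 \<longrightarrow> xs ! i \<noteq> \<one>\<^bsub>G\<^esub>"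
    "sum_list (map ?w xs) = ?w g" "mprod G xs = g" using xs unfolding Fact_def by auto
  have bM: "\<And>b. b \<in> set ?B \<Longrightarrow> set b \<subseteq> MonX G S" using blocks_set xsF(2) by blast
  have MC: "MonX G S \<subseteq> carrier G" by (rule MonX_carrier[OF G])
  have bC: "\<forall>b\<in>set ?B. set b \<subseteq> carrier G" using bM MC by blast
  have ysM: "set ?ys \<subseteq> MonX G S" using bM MonX_mprod[OF G] by auto
  have cB: "concat ?B = xs" by (rule concat_blocks[OF ks(2)])
  have prod: "mprod G ?ys = g" using mprod_concat[OF G(1) bC] cB xsF(5) by simp
  have le: "\<forall>b\<in>set ?B. ?w (mprod G b) \<le> sum_list (map ?w b)" using bM wlen_sub[OF G] by blast
  have sv: "sum_list (map (\<lambda>b. sum_list (map ?w b)) ?B) = ?w g"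
    using sum_list_map_concat[of ?w ?B] cB xsF(4) by simp
  have "?w g \<le> sum_list (map ?w ?ys)" using wlen_sub[OF G ysM] prod by simp
  also have "\<dots> = sum_list (map (\<lambda>b. ?w (mprod G b)) ?B)" by (simp add: comp_def)
  finally have ge: "?w g \<le> sum_list (map (\<lambda>b. ?w (mprod G b)) ?B)" .
  have "sum_list (map (\<lambda>b. ?w (mprod G b)) ?B) \<le> sum_list (map (\<lambda>b. sum_list (map ?w b)) ?B)"
    using le by (intro sum_list_mono) auto
  then have eqs: "map (\<lambda>b. ?w (mprod G b)) ?B = map (\<lambda>b. sum_list (map ?w b)) ?B"
    using ge sv le by (intro sum_list_eq_map) auto
  have L: "map ?w ?ys = map sum_list (blocks ks (map ?w xs))"
    using eqs by (simp add: blocks_map comp_def)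
  have "sum_list (map ?w ?ys) = sum_list (map (\<lambda>b. ?w (mprod G b)) ?B)" by (simp add: comp_def)
  also have "\<dots> = sum_list (map (\<lambda>b. sum_list (map ?w b)) ?B)" by (simp only: eqs)
  finally have sum: "sum_list (map ?w ?ys) = ?w g" using sv by simp
  have "\<forall>i. 0 < i \<and> i < length (map ?w xs) - 1 \<longrightarrow> 0 < map ?w xs ! i"
  proof (intro allI impI)
    fix i assume i: "0 < i \<and> i < length (map ?w xs) - 1"
    then have "xs ! i \<noteq> \<one>\<^bsub>G\<^esub>" "xs ! i \<in> MonX G S" using xsF(2,3) by auto
    then have "?w (xs ! i) \<noteq> 0" using wlen_zero[of "xs ! i" G S] by blast
    moreover have "i < length xs" using i by auto
    ultimately show "0 < map ?w xs ! i" by simp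
  qed
  then have Q: "\<forall>x\<in>set (butlast (tl (map ?w xs))). 0 < x" by (simp only: inner_iff)
  have "\<forall>x\<in>set (butlast (tl (map ?w ?ys))). 0 < x"
    unfolding L by (rule inner_blocks[OF ks(1) _ ks(3) Q]) (simp add: ks(2))
  then have Q2: "\<forall>i. 0 < i \<and> i < length (map ?w ?ys) - 1 \<longrightarrow> 0 < map ?w ?ys ! i"
    by (simp only: inner_iff)
  have inner: "\<forall>i. 0 < i \<and> i < length ?ys - 1 \<longrightarrow> ?ys ! i \<noteq> \<one>\<^bsub>G\<^esub>"
  proof (intro allI impI)
    fix i assume i: "0 < i \<and> i < length ?ys - 1"
    then have "0 < ?w (?ys ! i)" using Q2 by auto
    then show "?ys ! i \<noteq> \<one>\<^bsub>G\<^esub>" using wlen_one[of G S] by auto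
  qed
  have "?ys \<in> Fact G S g" unfolding Fact_def using ks(3) ysM inner sum prod by auto
  then show ?thesis using L by blast
qed



lemma sum_take_lt:
  fixes w :: "nat list"
  assumes c: "\<forall>j. 0 < j \<and> Suc j < length w \<longrightarrow> 0 < w ! j" and "0 < a" "a < b" "b < length w"
  shows "sum_list (take a w) < sum_list (take b w)"
proof -
  have tb: "take b w = take a w @ take (b - a) (drop a w)"
    using take_add[of a "b - a" w] assms(3) by simp
  have "take (b - a) (drop a w) ! 0 = w ! a" using assms by simp
  moreover have "0 < length (take (b - a) (drop a w))" using assms by simp
  ultimately have "w ! a \<in> set (take (b - a) (drop a w))"
    by (metis nth_mem)
  then have "w ! a \<le> sum_list (take (b - a) (drop a w))" by (rule member_le_sum_list) simp
  moreover have "0 < w ! a" using c assms by auto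
  ultimately show ?thesis using tb by simp
qed

lemma blocks_inj:
  fixes w :: "nat list"
  shows "\<forall>j. 0 < j \<and> Suc j < length w \<longrightarrow> 0 < w ! j \<Longrightarrow> \<forall>k\<in>set ky. 0 < k \<Longrightarrow> \<forall>k\<in>set kz. 0 < k \<Longrightarrow>
   sum_list ky = length w \<Longrightarrow> sum_list kz = length w \<Longrightarrow>
   map sum_list (blocks ky w) = map sum_list (blocks kz w) \<Longrightarrow> ky = kz"
proof (induction ky arbitrary: kz w)
  case Nil
  then have "length (map sum_list (blocks [] w)) = length (map sum_list (blocks kz w))" by simp
  then have "length kz = 0" by simp
  then show ?case by simp
next
  case (Cons a ky)
  have "length (map sum_list (blocks (a # ky) w)) = length (map sum_list (blocks kz w))"
    using Cons.prems(6) by simp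
  then have "length kz = Suc (length ky)" by simp
  then obtain b kz' where kz: "kz = b # kz'" by (cases kz) auto
  have hd: "sum_list (take a w) = sum_list (take b w)" and tl:
    "map sum_list (blocks ky (drop a w)) = map sum_list (blocks kz' (drop b w))"
    using Cons.prems(6) kz by auto
  have "length (map sum_list (blocks ky (drop a w))) = length (map sum_list (blocks kz' (drop b w)))"
    using tl by simp
  then have len: "length ky = length kz'" by simp
  have a0: "0 < a" and b0: "0 < b" using Cons.prems kz by auto
  have ab: "a = b"
  proof (rule ccontr)
    assume "a \<noteq> b"
    then consider "a < b" | "b < a" by linarith
    then show False
    proof cases
      case 1
      have "\<not> b < length w" using sum_take_lt[OF Cons.prems(1) a0 1] hd by auto
      then have "b = length w" using Cons.prems(5) kz by simp
      then have "kz' = []" using Cons.prems(3,5) kz by (cases kz') auto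
      then have "ky = []" using len by simp
      then show False using Cons.prems(4) \<open>b = length w\<close> 1 by simp
    next
      case 2
      have "\<not> a < length w" using sum_take_lt[OF Cons.prems(1) b0 2] hd by auto
      then have "a = length w" using Cons.prems(4) by simp
      then have "ky = []" using Cons.prems(2,4) by (cases ky) auto
      then have "kz' = []" using len by simp
      then show False using Cons.prems(5) kz \<open>a = length w\<close> 2 by simp
    qed
  qed
  have "ky = kz'"
  proof (rule Cons.IH[of "drop a w" kz'])
    show "\<forall>j. 0 < j \<and> Suc j < length (drop a w) \<longrightarrow> 0 < drop a w ! j"
      using Cons.prems(1) a0 by auto
    show "\<forall>k\<in>set ky. 0 < k" using Cons.prems(2) by simp
    show "\<forall>k\<in>set kz'. 0 < k" using Cons.prems(3) kz by simp
    show "sum_list ky = length (drop a w)" using Cons.prems(4) by simp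
    show "sum_list kz' = length (drop a w)" using Cons.prems(5) kz ab by simp
    show "map sum_list (blocks ky (drop a w)) = map sum_list (blocks kz' (drop a w))" using tl ab by simp
  qed
  then show ?case using ab kz by simp
qed

lemma sum_S1: "set w \<subseteq> {1::int} \<Longrightarrow> sum_list w = int (length w)"
  by (induction w) auto

lemma wlen_int: "wlen integer_group {1} (int m) = m"
  unfolding wlen_def
proof (rule Least_equality)
  show "\<exists>xs. set xs \<subseteq> {1} \<and> length xs = m \<and> mprod integer_group xs = int m"
    by (intro exI[of _ "replicate m 1"]) (auto simp: mprod_int sum_list_replicate)
next
  fix y assume "\<exists>xs. set xs \<subseteq> {1} \<and> length xs = y \<and> mprod integer_group xs = int m"
  then obtain xs where "set xs \<subseteq> {1}" "length xs = y" "sum_list xs = int m" by (auto simp: mprod_int)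
  then show "m \<le> y" using sum_S1 by fastforce
qed

lemma MonX_int: "x \<in> MonX integer_group {1} \<longleftrightarrow> 0 \<le> x"
proof
  assume "x \<in> MonX integer_group {1}"
  then obtain w where "set w \<subseteq> {1}" "x = sum_list w" unfolding MonX_def by (auto simp: mprod_int)
  then show "0 \<le> x" using sum_S1 by simp
next
  assume "0 \<le> x"
  then have "x = mprod integer_group (replicate (nat x) 1)" by (simp add: mprod_int sum_list_replicate)
  then show "x \<in> MonX integer_group {1}" unfolding MonX_def by (auto intro!: exI[of _ "replicate (nat x) 1"])
qed

lemma Lmap_eq: "Lmap G S xs = map int (map (wlen G S) xs)"
  by (simp add: Lmap_def)

lemma int_blocks: "map (mprod integer_group) (blocks ks (map int w)) = map int (map sum_list (blocks ks w))"
  by (simp add: mprod_int blocks_map sum_list_of_nat comp_def)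

lemma inner_pos:
  assumes "xs \<in> Fact G S g"
  shows "\<forall>j. 0 < j \<and> Suc j < length (map (wlen G S) xs) \<longrightarrow> 0 < map (wlen G S) xs ! j"
proof (intro allI impI)
  fix i assume i: "0 < i \<and> Suc i < length (map (wlen G S) xs)"
  have xsF: "set xs \<subseteq> MonX G S" "\<forall>i. 0 < i \<and> i < length xs - 1 \<longrightarrow> xs ! i \<noteq> \<one>\<^bsub>G\<^esub>"
    using assms unfolding Fact_def by auto
  have il: "i < length xs" using i by auto
  then have "xs ! i \<noteq> \<one>\<^bsub>G\<^esub>" "xs ! i \<in> MonX G S" using xsF i by auto
  then have "wlen G S (xs ! i) \<noteq> 0" using wlen_zero[of "xs ! i" G S] by blast
  then show "0 < map (wlen G S) xs ! i" using il by simp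
qed

lemma Lmap_Comp:
  assumes G: "monoid G" "S \<subseteq> carrier G" and xs: "xs \<in> Fact G S g"
  shows "Lmap G S xs \<in> Comp (wlen G S g)"
proof -
  have xsF: "2 \<le> length xs" "sum_list (map (wlen G S) xs) = wlen G S g" using xs unfolding Fact_def by auto
  have ip: "\<forall>j. 0 < j \<and> Suc j < length (map (wlen G S) xs) \<longrightarrow> 0 < map (wlen G S) xs ! j"
    by (rule inner_pos[OF xs])
  have inner: "\<forall>i. 0 < i \<and> i < length (Lmap G S xs) - 1 \<longrightarrow> Lmap G S xs ! i \<noteq> \<one>\<^bsub>integer_group\<^esub>"
  proof (intro allI impI)
    fix i assume i: "0 < i \<and> i < length (Lmap G S xs) - 1"
    then have "0 < map (wlen G S) xs ! i" using ip by (auto simp: Lmap_def)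
    then show "Lmap G S xs ! i \<noteq> \<one>\<^bsub>integer_group\<^esub>" using i by (auto simp: Lmap_def)
  qed
  have s: "sum_list (map (wlen integer_group {1}) (Lmap G S xs)) = wlen G S g"
    using xsF(2) by (simp add: Lmap_def comp_def wlen_int)
  have p: "mprod integer_group (Lmap G S xs) = int (wlen G S g)"
    using xsF(2) sum_list_of_nat[of "map (wlen G S) xs", where 'a=int] by (simp add: Lmap_eq mprod_int)
  show ?thesis unfolding Comp_def Fact_def using xsF(1) inner s p
    by (auto simp: wlen_int MonX_int Lmap_def)
qed

lemma down_struct:
  assumes G: "monoid G" "S \<subseteq> carrier G" and xs: "xs \<in> Fact G S g" and ys: "ys \<in> Fact G S g"
    and r: "(merge_step G)\<^sup>*\<^sup>* xs ys"
  shows "\<exists>ks. (\<forall>k\<in>set ks. 0 < k) \<and> sum_list ks = length xs \<and> 2 \<le> length ks \<and>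
     ys = map (mprod G) (blocks ks xs) \<and> map (wlen G S) ys = map sum_list (blocks ks (map (wlen G S) xs))"
proof -
  have "set xs \<subseteq> carrier G" using xs MonX_carrier[OF G] unfolding Fact_def by auto
  then obtain ks where ks: "\<forall>k\<in>set ks. 0 < k" "sum_list ks = length xs" "ys = map (mprod G) (blocks ks xs)"
    using reach_blocks[OF G(1) _ r] by blast
  have "2 \<le> length ks" using ys ks(3) unfolding Fact_def by auto
  then show ?thesis using fact_blocks[OF G xs ks(1,2)] ks by auto
qed

lemma Lmap_reach:
  assumes G: "monoid G" "S \<subseteq> carrier G" and ys: "ys \<in> Fact G S g" and zs: "zs \<in> Fact G S g"
    and r: "(merge_step G)\<^sup>*\<^sup>* ys zs"
  shows "(merge_step integer_group)\<^sup>*\<^sup>* (Lmap G S ys) (Lmap G S zs)"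
proof -
  obtain ks where ks: "\<forall>k\<in>set ks. 0 < k" "sum_list ks = length ys"
     "map (wlen G S) zs = map sum_list (blocks ks (map (wlen G S) ys))"
    using down_struct[OF G ys zs r] by blast
  have "Lmap G S zs = map (mprod integer_group) (blocks ks (Lmap G S ys))"
    unfolding Lmap_eq int_blocks using ks(3) by simp
  moreover have "(merge_step integer_group)\<^sup>*\<^sup>* (Lmap G S ys) (map (mprod integer_group) (blocks ks (Lmap G S ys)))"
    by (rule blocks_reach) (use ks group.is_monoid[OF group_integer_group] in \<open>auto simp: Lmap_def\<close>)
  ultimately show ?thesis by simp
qed

lemma down_inj:
  assumes G: "monoid G" "S \<subseteq> carrier G" and xs: "xs \<in> Fact G S g"
    and ys: "ys \<in> Fact G S g" "(merge_step G)\<^sup>*\<^sup>* xs ys"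
    and zs: "zs \<in> Fact G S g" "(merge_step G)\<^sup>*\<^sup>* xs zs"
    and eq: "Lmap G S ys = Lmap G S zs"
  shows "ys = zs"
proof -
  obtain ky where ky: "\<forall>k\<in>set ky. 0 < k" "sum_list ky = length xs" "ys = map (mprod G) (blocks ky xs)"
     "map (wlen G S) ys = map sum_list (blocks ky (map (wlen G S) xs))"
    using down_struct[OF G xs ys] by blast
  obtain kz where kz: "\<forall>k\<in>set kz. 0 < k" "sum_list kz = length xs" "zs = map (mprod G) (blocks kz xs)"
     "map (wlen G S) zs = map sum_list (blocks kz (map (wlen G S) xs))"
    using down_struct[OF G xs zs] by blast
  have "map (wlen G S) ys = map (wlen G S) zs" using eq unfolding Lmap_eq
    using inj_map_eq_map[OF inj_of_nat] by blast
  then have "ky = kz"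
    by (intro blocks_inj[OF inner_pos[OF xs] ky(1) kz(1)]) (use ky kz in auto)
  then show ?thesis using ky kz by simp
qed



theorem lemma3p10:
  fixes G (structure) and S :: "'a set" and g :: 'a and xs :: "'a list"
  assumes "group G"
    and "S \<subseteq> carrier G"
    and "generate G S = carrier G"
    and "conj_closed G S"
    and "g \<in> MonX G S"
    and "n = wlen G S g"
    and "xs \<in> Fact G S g"
  shows "bij_betw (Lmap G S) (down G S g xs) (comp_down n (Lmap G S xs))
    \<and> (\<forall>ys\<in>down G S g xs. \<forall>zs\<in>down G S g xs.
          fact_le G S g ys zs \<longleftrightarrow> comp_le n (Lmap G S ys) (Lmap G S zs))"
proof -
  have G: "monoid G" "S \<subseteq> carrier G" using assms(1,2) group.is_monoid by auto
  have MZ: "monoid integer_group" using group.is_monoid[OF group_integer_group] .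
  note xs = assms(7)
  have dn: "ys \<in> down G S g xs \<longleftrightarrow> ys \<in> Fact G S g \<and> (merge_step G)\<^sup>*\<^sup>* xs ys" for ys
    using xs unfolding down_def fact_le_def by auto
  have cdn: "as \<in> comp_down n bs \<longleftrightarrow> as \<in> Comp n \<and> bs \<in> Comp n \<and> (merge_step integer_group)\<^sup>*\<^sup>* bs as"
    for as bs unfolding comp_down_def down_def fact_le_def Comp_def by auto
  have cle: "comp_le n as bs \<longleftrightarrow> as \<in> Comp n \<and> bs \<in> Comp n \<and> (merge_step integer_group)\<^sup>*\<^sup>* bs as"
    for as bs unfolding comp_le_def fact_le_def Comp_def by auto
  have LC: "ys \<in> Fact G S g \<Longrightarrow> Lmap G S ys \<in> Comp n" for ys
    using Lmap_Comp[OF G] assms(6) by blast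
  have carF: "ys \<in> Fact G S g \<Longrightarrow> set ys \<subseteq> carrier G" for ys
    using MonX_carrier[OF G] unfolding Fact_def by auto
  have inj: "inj_on (Lmap G S) (down G S g xs)"
    unfolding inj_on_def using down_inj[OF G xs] dn by blast
  have sub: "Lmap G S ` down G S g xs \<subseteq> comp_down n (Lmap G S xs)"
  proof
    fix as assume "as \<in> Lmap G S ` down G S g xs"
    then obtain ys where ys: "ys \<in> Fact G S g" "(merge_step G)\<^sup>*\<^sup>* xs ys" "as = Lmap G S ys"
      using dn by auto
    show "as \<in> comp_down n (Lmap G S xs)"
      unfolding cdn using LC[OF ys(1)] LC[OF xs] Lmap_reach[OF G xs ys(1,2)] ys(3) by simp
  qed
  have sup: "comp_down n (Lmap G S xs) \<subseteq> Lmap G S ` down G S g xs"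
  proof
    fix as assume "as \<in> comp_down n (Lmap G S xs)"
    then have as: "as \<in> Comp n" "(merge_step integer_group)\<^sup>*\<^sup>* (Lmap G S xs) as" unfolding cdn by auto
    obtain ks where ks: "\<forall>k\<in>set ks. 0 < k" "sum_list ks = length (Lmap G S xs)"
      "as = map (mprod integer_group) (blocks ks (Lmap G S xs))"
      using reach_blocks[OF MZ _ as(2)] by auto
    have "2 \<le> length as" using as(1) unfolding Comp_def Fact_def by auto
    then have k2: "2 \<le> length ks" using ks(3) by simp
    have ksl: "sum_list ks = length xs" using ks(2) by (simp add: Lmap_def)
    let ?ys = "map (mprod G) (blocks ks xs)"
    have yF: "?ys \<in> Fact G S g"
      and yw: "map (wlen G S) ?ys = map sum_list (blocks ks (map (wlen G S) xs))"
      using fact_blocks[OF G xs ks(1) ksl k2] by auto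
    have "Lmap G S ?ys = as" unfolding ks(3) Lmap_eq int_blocks yw by simp
    moreover have "(merge_step G)\<^sup>*\<^sup>* xs ?ys"
      by (rule blocks_reach[OF G(1) carF[OF xs] ks(1) ksl])
    ultimately show "as \<in> Lmap G S ` down G S g xs" using yF dn by blast
  qed
  have bij: "bij_betw (Lmap G S) (down G S g xs) (comp_down n (Lmap G S xs))"
    unfolding bij_betw_def using inj sub sup by blast
  have ord: "fact_le G S g ys zs \<longleftrightarrow> comp_le n (Lmap G S ys) (Lmap G S zs)"
    if ys: "ys \<in> down G S g xs" and zs: "zs \<in> down G S g xs" for ys zs
  proof
    assume "fact_le G S g ys zs"
    then have "ys \<in> Fact G S g" "zs \<in> Fact G S g" "(merge_step G)\<^sup>*\<^sup>* zs ys" unfolding fact_le_def by auto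
    then show "comp_le n (Lmap G S ys) (Lmap G S zs)"
      unfolding cle using LC Lmap_reach[OF G] by blast
  next
    assume "comp_le n (Lmap G S ys) (Lmap G S zs)"
    then have c: "Lmap G S ys \<in> Comp n" "(merge_step integer_group)\<^sup>*\<^sup>* (Lmap G S zs) (Lmap G S ys)"
      unfolding cle by auto
    have yF: "ys \<in> Fact G S g" "(merge_step G)\<^sup>*\<^sup>* xs ys" and zF: "zs \<in> Fact G S g" "(merge_step G)\<^sup>*\<^sup>* xs zs"
      using ys zs dn by auto
    obtain j where j: "\<forall>k\<in>set j. 0 < k" "sum_list j = length (Lmap G S zs)"
      "Lmap G S ys = map (mprod integer_group) (blocks j (Lmap G S zs))"
      using reach_blocks[OF MZ _ c(2)] by auto
    have "2 \<le> length (Lmap G S ys)" using c(1) unfolding Comp_def Fact_def by auto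
    then have j2: "2 \<le> length j" using j(3) by simp
    have jl: "sum_list j = length zs" using j(2) by (simp add: Lmap_def)
    let ?zs' = "map (mprod G) (blocks j zs)"
    have zF': "?zs' \<in> Fact G S g"
      and zw: "map (wlen G S) ?zs' = map sum_list (blocks j (map (wlen G S) zs))"
      using fact_blocks[OF G zF(1) j(1) jl j2] by auto
    have "Lmap G S ?zs' = map int (map sum_list (blocks j (map (wlen G S) zs)))"
      by (simp only: Lmap_eq zw)
    also have "\<dots> = map (mprod integer_group) (blocks j (Lmap G S zs))"
      by (simp only: Lmap_eq int_blocks)
    finally have Le: "Lmap G S ?zs' = Lmap G S ys" using j(3) by simp
    have r1: "(merge_step G)\<^sup>*\<^sup>* zs ?zs'"
      by (rule blocks_reach[OF G(1) carF[OF zF(1)] j(1) jl])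
    then have r2: "(merge_step G)\<^sup>*\<^sup>* xs ?zs'" using zF(2) by simp
    have "?zs' = ys" using down_inj[OF G xs zF' r2 yF Le] .
    then show "fact_le G S g ys zs" unfolding fact_le_def using yF zF r1 by simp
  qed
  show ?thesis using bij ord by blast
qed

end
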